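(* Let $n\ge 1$ and let $\beta=\beta^{(2n)}=(\beta_{ij})_{i,j\ge 0,\ i+j\le 2n}$ be a real truncated moment sequence with moment matrix $\mathcal M(n)(\beta)$. Let $r=\operatorname{rank}\mathcal M(n)(\beta)$ and $v=\operatorname{card}\mathcal V(\mathcal M(n)(\beta))$, and assume $v<\infty$ and $v=r$. Then $\beta$ admits a representing measure if and only if $\mathcal M(n)(\beta)$ has a positive semidefinite moment matrix extension $\mathcal M(n+1)$ satisfying $\operatorname{rank}\mathcal M(n+1)\le \operatorname{card}\mathcal V(\mathcal M(n+1))$.
   Context: For a real sequence $\gamma=(\gamma_{ij})_{i,j\ge0,\ i+j\le 2m}$, the moment matrix $\mathcal M(m)(\gamma)$ has rows and columns indexed by the monomials $1,X,Y,X^2,XY,Y^2,\dots,X^m,\dots,Y^m$ (degree-lexicographic order), the entry in row $X^iY^j$ and column $X^kY^l$ being $\gamma_{i+k,j+l}$. For a polynomial $p(x,y)=\sum a_{ij}x^iy^j$ of degree at most $m$, $p(X,Y)$ denotes the corresponding linear combination $\sum a_{ij}X^iY^j$ of columns of $\mathcal M(m)$. The algebraic variety of $\mathcal M(m)$ is $\mathcal V(\mathcal M(m))=\bigcap\{\mathcal Z(p): \deg p\le m,\ p(X,Y)=\mathbf 0\}$, where $\mathcal Z(p)=\{(x,y)\in\mathbb R^2: p(x,y)=0\}$. A representing measure for $\beta$ is a positive Borel measure $\mu$ on $\mathbb R^2$ with $\beta_{ij}=\int x^iy^j\,d\mu$ for all $i+j\le 2n$. A moment matrix extension $\mathcal M(n+1)$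 of $\mathcal M(n)(\beta)$ is a matrix $\mathcal M(n+1)(\tilde\beta)$ for some real sequence $\tilde\beta$ of degree $2n+2$ with $\tilde\beta_{ij}=\beta_{ij}$ for $i+j\le 2n$. *)

theory Defs
  imports "HOL-Analysis.Analysis" "Jordan_Normal_Form.DL_Rank"
begin

text \<open>Monomials X^i Y^j of degree at most m, encoded as exponent pairs (i,j),
  in degree-lexicographic order 1, X, Y, X^2, XY, Y^2, ...\<close>
definition mons :: "nat \<Rightarrow> (nat \<times> nat) list" where
  "mons m = concat (map (\<lambda>k. map (\<lambda>i. (i, k - i)) (rev [0..<Suc k])) [0..<Suc m])"

definition msize :: "nat \<Rightarrow> nat" where
  "msize m = length (mons m)"

definition moment_matrix :: "nat \<Rightarrow> (nat \<Rightarrow> nat \<Rightarrow> real) \<Rightarrow> real mat" where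
  "moment_matrix m \<gamma> = mat (msize m) (msize m)
     (\<lambda>(a, b). \<gamma> (fst (mons m ! a) + fst (mons m ! b)) (snd (mons m ! a) + snd (mons m ! b)))"

definition poly_eval :: "nat \<Rightarrow> real vec \<Rightarrow> real \<times> real \<Rightarrow> real" where
  "poly_eval m c = (\<lambda>(x, y). \<Sum>a<msize m. c $ a * x ^ fst (mons m ! a) * y ^ snd (mons m ! a))"

text \<open>Algebraic variety: common zeros of all polynomials p of degree at most m with p(X,Y) = 0
  (i.e. the coefficient vector lies in the kernel of the moment matrix).\<close>
definition variety :: "nat \<Rightarrow> (nat \<Rightarrow> nat \<Rightarrow> real) \<Rightarrow> (real \<times> real) set" where
  "variety m \<gamma> = (\<Inter> {{z. poly_eval m c z = 0} | c.
       c \<in> carrier_vec (msize m) \<and> moment_matrix m \<gamma> *\<^sub>v c = 0\<^sub>v (msize m)})"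

definition mm_rank :: "nat \<Rightarrow> (nat \<Rightarrow> nat \<Rightarrow> real) \<Rightarrow> nat" where
  "mm_rank m \<gamma> = vec_space.rank (msize m) (moment_matrix m \<gamma>)"

definition psd :: "real mat \<Rightarrow> bool" where
  "psd A \<longleftrightarrow> (\<forall>v \<in> carrier_vec (dim_row A). v \<bullet> (A *\<^sub>v v) \<ge> 0)"

definition representing_measure :: "nat \<Rightarrow> (nat \<Rightarrow> nat \<Rightarrow> real) \<Rightarrow> (real \<times> real) measure \<Rightarrow> bool" where
  "representing_measure n \<beta> \<mu> \<longleftrightarrow> sets \<mu> = sets borel \<and>
     (\<forall>i j. i + j \<le> 2 * n \<longrightarrow>
        integrable \<mu> (\<lambda>z. (fst z) ^ i * (snd z) ^ j) \<and>
        (\<integral>z. (fst z) ^ i * (snd z) ^ j \<partial>\<mu>) = \<beta> i j)"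

end

theory Submission
  imports Defs
begin

no_notation Finite_Cartesian_Product.vec.vec_nth (infixl "$" 90)

lemma inj_imp_surj_fin:
  fixes f :: "'i \<Rightarrow> 'k \<Rightarrow> real"
  assumes fI: "finite I" and fK: "finite K" and cI: "card I = card K"
   and inj: "\<And>c. (\<forall>i\<in>I. (\<Sum>k\<in>K. f i k * c k) = 0) \<Longrightarrow> \<forall>k\<in>K. c k = 0"
  shows "\<exists>y. \<forall>i\<in>I. (\<Sum>k\<in>K. f i k * y k) = t i"
proof -
  define r where "r = card I"
  obtain gi where gi: "bij_betw gi {0..<r} I" using ex_bij_betw_nat_finite[OF fI] r_def by blast
  obtain gk where gk: "bij_betw gk {0..<r} K" using ex_bij_betw_nat_finite[OF fK] r_def cI by metis
  define C where "C = mat r r (\<lambda>(a,b). f (gi a) (gk b))"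
  have Cc: "C \<in> carrier_mat r r" unfolding C_def by simp
  have sumK: "(\<Sum>k\<in>K. h k) = (\<Sum>b<r. h (gk b))" for h :: "'k \<Rightarrow> real"
    using sum.reindex_bij_betw[OF gk, of h] by (simp add: atLeast0LessThan)
  have Cv: "(C *\<^sub>v v) $ a = (\<Sum>b<r. f (gi a) (gk b) * v $ b)" if "a < r" "v \<in> carrier_vec r" for a v
    using that unfolding C_def by (auto simp: mult_mat_vec_def scalar_prod_def row_def atLeast0LessThan intro!: sum.cong)
  have "det C \<noteq> 0"
  proof
    assume "det C = 0"
    then obtain v where v: "v \<in> carrier_vec r" "v \<noteq> 0\<^sub>v r" "C *\<^sub>v v = 0\<^sub>v r"
      using det_0_iff_vec_prod_zero_field[OF Cc] by blast
    define c where "c k = v $ (the_inv_into {0..<r} gk k)" for k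
    have cgk: "c (gk b) = v $ b" if "b < r" for b
      unfolding c_def using gk that by (simp add: bij_betw_def the_inv_into_f_f)
    have "\<forall>i\<in>I. (\<Sum>k\<in>K. f i k * c k) = 0"
    proof
      fix i assume "i \<in> I"
      then obtain a where a: "a < r" "i = gi a" using gi by (auto simp: bij_betw_def)
      have "(\<Sum>k\<in>K. f i k * c k) = (\<Sum>b<r. f (gi a) (gk b) * v $ b)"
        unfolding sumK using a cgk by simp
      also have "\<dots> = (C *\<^sub>v v) $ a" using Cv[OF a(1) v(1)] by simp
      finally show "(\<Sum>k\<in>K. f i k * c k) = 0" using v(3) a(1) by simp
    qed
    then have "\<forall>k\<in>K. c k = 0" by (rule inj)
    then have "v = 0\<^sub>v r"
      using v(1) cgk gk by (intro eq_vecI) (auto simp: bij_betw_def)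
    then show False using v by simp
  qed
  then have "C \<in> Units (ring_mat TYPE(real) r ())" by (rule det_non_zero_imp_unit[OF Cc])
  then obtain D where D: "D \<in> carrier_mat r r" "C * D = 1\<^sub>m r"
    unfolding Units_def by (auto simp: ring_mat_def)
  define tv where "tv = vec r (\<lambda>a. t (gi a))"
  define u where "u = D *\<^sub>v tv"
  have u: "u \<in> carrier_vec r" using D unfolding u_def tv_def by simp
  have Cu: "C *\<^sub>v u = tv" unfolding u_def using D Cc
    by (metis assoc_mult_mat_vec one_mult_mat_vec tv_def vec_carrier)
  define y where "y k = u $ (the_inv_into {0..<r} gk k)" for k
  have ygk: "y (gk b) = u $ b" if "b < r" for b
    unfolding y_def using gk that by (simp add: bij_betw_def the_inv_into_f_f)
  show ?thesis
  proof (intro exI ballI)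
    fix i assume "i \<in> I"
    then obtain a where a: "a < r" "i = gi a" using gi by (auto simp: bij_betw_def)
    have "(\<Sum>k\<in>K. f i k * y k) = (\<Sum>b<r. f (gi a) (gk b) * u $ b)"
      unfolding sumK using a ygk by simp
    also have "\<dots> = (C *\<^sub>v u) $ a" using Cv a u by simp
    also have "\<dots> = t i" using Cu a unfolding tv_def by simp
    finally show "(\<Sum>k\<in>K. f i k * y k) = t i" .
  qed
qed

context vec_space begin

lemma lincomb_coord:
  assumes "S \<subseteq> carrier_vec n" "i < n"
  shows "lincomb a S $ i = (\<Sum>v\<in>S. a v * v $ i)"
  using lincomb_index[OF assms(2,1)] .

lemma indep_cols_inj:
  fixes A :: "'a mat"
  assumes A: "A \<in> carrier_mat n nc" and J: "J \<subseteq> {..<nc}"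
  and ind: "\<And>y. (\<forall>i<n. (\<Sum>j\<in>J. y j * A $$ (i,j)) = 0) \<Longrightarrow> \<forall>j\<in>J. y j = 0"
  shows "inj_on (col A) J"
proof (rule inj_onI, rule ccontr)
  fix j1 j2 assume j: "j1 \<in> J" "j2 \<in> J" "col A j1 = col A j2" "j1 \<noteq> j2"
  have fJ: "finite J" using J finite_subset by blast
  define y where "y j = (if j = j1 then 1 else if j = j2 then -1 else (0::'a))" for j
  have "\<forall>i<n. (\<Sum>j\<in>J. y j * A $$ (i,j)) = 0"
  proof (intro allI impI)
    fix i assume i: "i < n"
    have e: "A $$ (i,j1) = A $$ (i,j2)"
      using j(3) i J j(1,2) A by (metis carrier_matD(1) carrier_matD(2) col_def index_vec lessThan_iff subsetD)
    have "(\<Sum>j\<in>J. y j * A $$ (i,j)) = (\<Sum>j\<in>J. (if j = j1 then A $$ (i,j1) else 0) + (if j = j2 then - A $$ (i,j2) else 0))"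
      by (rule sum.cong) (auto simp: y_def j(4))
    also have "\<dots> = A $$ (i,j1) - A $$ (i,j2)" using fJ j(1,2) by (simp add: sum.distrib)
    finally show "(\<Sum>j\<in>J. y j * A $$ (i,j)) = 0" using e by simp
  qed
  then have "y j1 = 0" using ind j(1) by blast
  then show False by (simp add: y_def)
qed

lemma indep_cols_lin_indpt:
  fixes A :: "'a mat"
  assumes A: "A \<in> carrier_mat n nc" and J: "J \<subseteq> {..<nc}"
  and ind: "\<And>y. (\<forall>i<n. (\<Sum>j\<in>J. y j * A $$ (i,j)) = 0) \<Longrightarrow> \<forall>j\<in>J. y j = 0"
  shows "lin_indpt (col A ` J)"
proof
  assume ld: "lin_dep (col A ` J)"
  have fJ: "finite J" using J finite_subset by blast
  have inj: "inj_on (col A) J" by (rule indep_cols_inj[OF A J ind])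
  have Sc: "col A ` J \<subseteq> carrier_vec n" using A by auto
  obtain a v where av: "lincomb a (col A ` J) = 0\<^sub>v n" "v \<in> col A ` J" "a v \<noteq> 0"
    using finite_lin_dep[OF finite_imageI[OF fJ] ld] Sc by auto
  have "\<forall>i<n. (\<Sum>j\<in>J. a (col A j) * A $$ (i,j)) = 0"
  proof (intro allI impI)
    fix i assume i: "i < n"
    have "(\<Sum>j\<in>J. a (col A j) * A $$ (i,j)) = (\<Sum>j\<in>J. a (col A j) * col A j $ i)"
      using i A J by (intro sum.cong) auto
    also have "\<dots> = (\<Sum>w\<in>col A ` J. a w * w $ i)" using sum.reindex[OF inj, of "\<lambda>w. a w * w $ i"] by (simp add: comp_def)
    also have "\<dots> = lincomb a (col A ` J) $ i" using lincomb_coord[OF Sc i] by simp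
    finally show "(\<Sum>j\<in>J. a (col A j) * A $$ (i,j)) = 0" using av(1) i by simp
  qed
  then have "\<forall>j\<in>J. a (col A j) = 0" by (rule ind)
  then show False using av by auto
qed

lemma rank_ge_indep_cols:
  fixes A :: "'a mat"
  assumes A: "A \<in> carrier_mat n nc" and J: "J \<subseteq> {..<nc}"
  and ind: "\<And>y. (\<forall>i<n. (\<Sum>j\<in>J. y j * A $$ (i,j)) = 0) \<Longrightarrow> \<forall>j\<in>J. y j = 0"
  shows "card J \<le> rank A"
proof -
  have "col A ` J \<subseteq> set (cols A)" using A J by (auto simp: cols_def)
  from rank_ge_card_indpt[OF A this indep_cols_lin_indpt[OF A J ind]]
  show ?thesis using card_image[OF indep_cols_inj[OF A J ind]] by simp
qed

lemma indep_cols_exist: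
  fixes A :: "'a mat"
  assumes A: "A \<in> carrier_mat n nc"
  shows "\<exists>J. J \<subseteq> {..<nc} \<and> card J = rank A \<and>
     (\<forall>y. (\<forall>i<n. (\<Sum>j\<in>J. y j * A $$ (i,j)) = 0) \<longrightarrow> (\<forall>j\<in>J. y j = 0))"
proof -
  obtain S where S: "maximal S (\<lambda>T. T \<subseteq> set (cols A) \<and> lin_indpt T)"
    using maximal_exists[of "(\<lambda>T. T \<subseteq> set (cols A) \<and> lin_indpt T)" "card (set (cols A))" "{}"]
    by (meson List.finite_set card_mono empty_iff empty_subsetI finite_lin_indpt2 rev_finite_subset)
  have rk: "rank A = card S" using rank_card_indpt[OF A S] .
  have SA: "S \<subseteq> set (cols A)" and li: "lin_indpt S" using S by (auto simp: maximal_def)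
  define jj where "jj v = (SOME j. j < nc \<and> col A j = v)" for v
  have jj: "jj v < nc \<and> col A (jj v) = v" if "v \<in> S" for v
  proof -
    from that SA obtain j where "j < nc" "col A j = v" using A by (auto simp: cols_def)
    then show ?thesis unfolding jj_def by (metis (mono_tags, lifting) someI_ex)
  qed
  have injS: "inj_on jj S" by (metis inj_onI jj)
  define J where "J = jj ` S"
  have fS: "finite S" using SA finite_subset by blast
  have Sc: "S \<subseteq> carrier_vec n" using SA A by (auto simp: cols_def)
  show ?thesis
  proof (intro exI conjI allI impI)
    show "J \<subseteq> {..<nc}" using jj unfolding J_def by auto
    show "card J = rank A" unfolding J_def rk using card_image[OF injS] .
    fix y assume y: "\<forall>i<n. (\<Sum>j\<in>J. y j * A $$ (i,j)) = 0"
    define a where "a v = y (jj v)" for v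
    have "lincomb a S = 0\<^sub>v n"
    proof (rule eq_vecI)
      show "dim_vec (lincomb a S) = dim_vec (0\<^sub>v n)" using lincomb_dim[OF fS Sc] by simp
      fix i assume "i < dim_vec (0\<^sub>v n)"
      then have i: "i < n" by simp
      have "lincomb a S $ i = (\<Sum>v\<in>S. a v * v $ i)" using lincomb_coord[OF Sc i] .
      also have "\<dots> = (\<Sum>v\<in>S. y (jj v) * A $$ (i, jj v))"
        apply (rule sum.cong[OF refl])
        subgoal for v using jj[of v] i A by (metis a_def carrier_matD(1) col_def index_vec)
        done
      also have "\<dots> = (\<Sum>j\<in>J. y j * A $$ (i,j))" unfolding J_def using sum.reindex[OF injS, of "\<lambda>j. y j * A $$ (i,j)"] by (simp add: comp_def)
      finally show "lincomb a S $ i = 0\<^sub>v n $ i" using y i by simp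
    qed
    then have "a \<in> S \<rightarrow> {0}" using not_lindepD[OF li fS subset_refl] by auto
    then show "\<forall>j\<in>J. y j = 0" unfolding J_def a_def by auto
  qed
qed

lemma indep_cols_span:
  fixes A :: "'a mat"
  assumes A: "A \<in> carrier_mat n nc" and J: "J \<subseteq> {..<nc}" and cJ: "rank A \<le> card J"
  and ind: "\<And>y. (\<forall>i<n. (\<Sum>j\<in>J. y j * A $$ (i,j)) = 0) \<Longrightarrow> \<forall>j\<in>J. y j = 0"
  and k: "k < nc"
  shows "\<exists>lam. \<forall>i<n. A $$ (i,k) = (\<Sum>j\<in>J. lam j * A $$ (i,j))"
proof -
  have fJ: "finite J" using J finite_subset by blast
  let ?S = "col A ` J"
  have inj: "inj_on (col A) J" by (rule indep_cols_inj[OF A J ind])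
  have li: "lin_indpt ?S" by (rule indep_cols_lin_indpt[OF A J ind])
  have Sc: "?S \<subseteq> carrier_vec n" using A by auto
  have ck: "col A k \<in> carrier_vec n" using A by auto
  have inspan: "col A k \<in> span ?S"
  proof (rule ccontr)
    assume ns: "col A k \<notin> span ?S"
    then have nin: "col A k \<notin> ?S" using span_mem[OF Sc] by blast
    have "lin_indpt (?S \<union> {col A k})" using lin_dep_iff_in_span[OF Sc li ck nin] ns by blast
    moreover have "?S \<union> {col A k} \<subseteq> set (cols A)" using A J k by (auto simp: cols_def)
    ultimately have "card (?S \<union> {col A k}) \<le> rank A" using rank_ge_card_indpt[OF A] by blast
    moreover have "card (?S \<union> {col A k}) = card J + 1"
      using nin fJ card_image[OF inj] by simp
    ultimately show False using cJ by simp
  qed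
  obtain a where a: "lincomb a ?S = col A k" using finite_in_span[OF finite_imageI[OF fJ] Sc inspan] by blast
  show ?thesis
  proof (intro exI allI impI)
    fix i assume i: "i < n"
    have "A $$ (i,k) = col A k $ i" using A i k by simp
    also have "\<dots> = (\<Sum>w\<in>?S. a w * w $ i)" by (simp only: a[symmetric] lincomb_coord[OF Sc i])
    also have "\<dots> = (\<Sum>j\<in>J. a (col A j) * col A j $ i)" using sum.reindex[OF inj, of "\<lambda>w. a w * w $ i"] by (simp add: comp_def)
    also have "\<dots> = (\<Sum>j\<in>J. a (col A j) * A $$ (i,j))"
      using i A J by (intro sum.cong) auto
    finally show "A $$ (i,k) = (\<Sum>j\<in>J. a (col A j) * A $$ (i,j))" .
  qed
qed

lemma rank_le_gen:
  fixes A :: "'a mat"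
  assumes A: "A \<in> carrier_mat n nc" and fT: "finite T" and g: "\<And>t. t \<in> T \<Longrightarrow> g t \<in> carrier_vec n"
  and sp: "\<And>k. k < nc \<Longrightarrow> \<exists>c. \<forall>i<n. A $$ (i,k) = (\<Sum>t\<in>T. c t * g t $ i)"
  shows "rank A \<le> card T"
proof -
  obtain S where S: "maximal S (\<lambda>T. T \<subseteq> set (cols A) \<and> lin_indpt T)"
    using maximal_exists[of "(\<lambda>T. T \<subseteq> set (cols A) \<and> lin_indpt T)" "card (set (cols A))" "{}"]
    by (meson List.finite_set card_mono empty_iff empty_subsetI finite_lin_indpt2 rev_finite_subset)
  have rk: "rank A = card S" using rank_card_indpt[OF A S] .
  have SA: "S \<subseteq> set (cols A)" and li: "lin_indpt S" using S by (auto simp: maximal_def)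
  have fS: "finite S" using SA finite_subset by blast
  let ?U = "g ` T"
  have Uc: "?U \<subseteq> carrier_vec n" using g by auto
  have fU: "finite ?U" using fT by simp
  have "S \<subseteq> span ?U"
  proof
    fix v assume "v \<in> S"
    then obtain k where k: "k < nc" "v = col A k" using SA A by (auto simp: cols_def)
    obtain c where c: "\<forall>i<n. A $$ (i,k) = (\<Sum>t\<in>T. c t * g t $ i)" using sp[OF k(1)] by blast
    define b where "b u = (\<Sum>t\<in>{t\<in>T. g t = u}. c t)" for u
    have "lincomb b ?U = v"
    proof (rule eq_vecI)
      show "dim_vec (lincomb b ?U) = dim_vec v" using lincomb_dim[OF fU Uc] k A by simp
      fix i assume "i < dim_vec v"
      then have i: "i < n" using k A by simp
      have "lincomb b ?U $ i = (\<Sum>u\<in>?U. b u * u $ i)" using lincomb_coord[OF Uc i] .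
      also have "\<dots> = (\<Sum>u\<in>?U. \<Sum>t\<in>{t\<in>T. g t = u}. c t * g t $ i)"
        unfolding b_def sum_distrib_right by (intro sum.cong) auto
      also have "\<dots> = (\<Sum>t\<in>T. c t * g t $ i)"
        using sum.group[OF fT fU, of g "\<lambda>t. c t * g t $ i"] by simp
      also have "\<dots> = v $ i" using c i k A by simp
      finally show "lincomb b ?U $ i = v $ i" .
    qed
    then show "v \<in> span ?U" using fU by (intro in_spanI[of _ b]) auto
  qed
  from replacement[OF fS fU Uc li this] have "card S \<le> card ?U" by auto
  also have "card ?U \<le> card T" using card_image_le[OF fT] .
  finally show ?thesis using rk by simp
qed

end

lemma atomic_rep:
  fixes Z :: "(real \<times> real) set"
  assumes fZ: "finite Z" and w: "\<And>z. z \<in> Z \<Longrightarrow> 0 \<le> w z"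
    and mom: "\<And>i j. i + j \<le> 2 * n \<Longrightarrow> \<beta> i j = (\<Sum>z\<in>Z. w z * (fst z ^ i * snd z ^ j))"
  shows "representing_measure n \<beta> (distr (point_measure Z w) borel (\<lambda>z. z))"
proof -
  let ?M = "point_measure Z w"
  have meas: "(\<lambda>z. z) \<in> measurable ?M borel" by simp
  have bm: "(\<lambda>z::real\<times>real. fst z ^ i * snd z ^ j) \<in> borel_measurable borel" for i j by (intro borel_measurable_continuous_onI continuous_intros)
  show ?thesis unfolding representing_measure_def
  proof (intro conjI allI impI)
    show "sets (distr ?M borel (\<lambda>z. z)) = sets borel" by simp
    fix i j :: nat assume ij: "i + j \<le> 2 * n"
    show "integrable (distr ?M borel (\<lambda>z. z)) (\<lambda>z. fst z ^ i * snd z ^ j)"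
      using integrable_distr_eq[OF meas bm] integrable_point_measure_finite[OF fZ] by simp
    show "(\<integral>z. fst z ^ i * snd z ^ j \<partial>distr ?M borel (\<lambda>z. z)) = \<beta> i j"
      using integral_distr[OF meas bm] lebesgue_integral_point_measure_finite[where f=w and g="\<lambda>z. fst z ^ i * snd z ^ j", OF fZ w] mom[OF ij]
      by simp
  qed
qed

lemma mons_Suc: "mons (Suc m) = mons m @ map (\<lambda>i. (i, Suc m - i)) (rev [0..<Suc (Suc m)])"
  unfolding mons_def by simp

lemma set_mons: "set (mons m) = {(i,j). i + j \<le> m}"
proof (induction m)
  case 0 then show ?case by (auto simp: mons_def)
next
  case (Suc m)
  show ?case unfolding mons_Suc set_append Suc by force
qed

lemma msize_Suc: "msize (Suc m) = msize m + (m + 2)"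
  unfolding msize_def mons_Suc by simp

lemma msize_pos: "0 < msize m"
  by (induction m) (auto simp: msize_def mons_def)

lemma mons_nth_Suc: "a < msize m \<Longrightarrow> mons (Suc m) ! a = mons m ! a"
  unfolding mons_Suc msize_def by (simp add: nth_append)

lemma mons_0: "mons m ! 0 = (0,0)"
proof (induction m)
  case 0 then show ?case by (simp add: mons_def)
next
  case (Suc m) then show ?case using mons_nth_Suc[of 0 m] msize_pos[of m] by simp
qed

lemma mons_deg: "a < msize m \<Longrightarrow> fst (mons m ! a) + snd (mons m ! a) \<le> m"
proof -
  assume "a < msize m"
  then have "mons m ! a \<in> set (mons m)" unfolding msize_def by simp
  then show ?thesis unfolding set_mons by auto
qed

lemma mons_idx: "i + j \<le> m \<Longrightarrow> \<exists>a < msize m. mons m ! a = (i,j)"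
proof -
  assume "i + j \<le> m"
  then have "(i,j) \<in> set (mons m)" unfolding set_mons by auto
  then show ?thesis unfolding msize_def by (metis in_set_conv_nth)
qed

lemma moment_matrix_carrier: "moment_matrix m \<gamma> \<in> carrier_mat (msize m) (msize m)"
  unfolding moment_matrix_def by simp

definition mm :: "nat \<Rightarrow> (nat \<Rightarrow> nat \<Rightarrow> real) \<Rightarrow> nat \<Rightarrow> nat \<Rightarrow> real" where
  "mm m \<gamma> a b = \<gamma> (fst (mons m ! a) + fst (mons m ! b)) (snd (mons m ! a) + snd (mons m ! b))"

lemma moment_matrix_index: "a < msize m \<Longrightarrow> b < msize m \<Longrightarrow> moment_matrix m \<gamma> $$ (a,b) = mm m \<gamma> a b"
  unfolding moment_matrix_def mm_def by simp

lemma mm_sym: "mm m \<gamma> a b = mm m \<gamma> b a"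
  unfolding mm_def by (simp add: add.commute)

definition ev :: "nat \<Rightarrow> real \<times> real \<Rightarrow> nat \<Rightarrow> real" where
  "ev m z a = fst z ^ fst (mons m ! a) * snd z ^ snd (mons m ! a)"

lemma poly_eval_ev: "poly_eval m c z = (\<Sum>a<msize m. c $ a * ev m z a)"
  unfolding poly_eval_def ev_def by (cases z) (simp add: mult.assoc)

lemma mult_mat_vec_sum: "M \<in> carrier_mat N N \<Longrightarrow> a < N \<Longrightarrow> v \<in> carrier_vec N \<Longrightarrow>
   (M *\<^sub>v v) $ a = (\<Sum>b<N. M $$ (a,b) * v $ b)"
  by (auto simp: mult_mat_vec_def scalar_prod_def atLeast0LessThan intro!: sum.cong)

lemma scalar_prod_sum: "w \<in> carrier_vec N \<Longrightarrow> v \<bullet> w = (\<Sum>a<N. v $ a * w $ a)"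
  by (auto simp: scalar_prod_def atLeast0LessThan)

definition kerf :: "nat \<Rightarrow> (nat \<Rightarrow> nat \<Rightarrow> real) \<Rightarrow> (nat \<Rightarrow> real) \<Rightarrow> bool" where
  "kerf m \<gamma> c \<longleftrightarrow> (\<forall>a<msize m. (\<Sum>b<msize m. mm m \<gamma> a b * c b) = 0)"

lemma variety_iff: "z \<in> variety m \<gamma> \<longleftrightarrow> (\<forall>c. kerf m \<gamma> c \<longrightarrow> (\<Sum>a<msize m. c a * ev m z a) = 0)"
proof
  assume z: "z \<in> variety m \<gamma>"
  show "\<forall>c. kerf m \<gamma> c \<longrightarrow> (\<Sum>a<msize m. c a * ev m z a) = 0"
  proof (intro allI impI)
    fix c assume k: "kerf m \<gamma> c"
    let ?v = "vec (msize m) c"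
    have "moment_matrix m \<gamma> *\<^sub>v ?v = 0\<^sub>v (msize m)"
    proof (rule eq_vecI)
      fix a assume "a < dim_vec (0\<^sub>v (msize m))"
      then have a: "a < msize m" by simp
      have "(moment_matrix m \<gamma> *\<^sub>v ?v) $ a = (\<Sum>b<msize m. mm m \<gamma> a b * c b)"
        using mult_mat_vec_sum[OF moment_matrix_carrier a, of ?v] a moment_matrix_index by simp
      then show "(moment_matrix m \<gamma> *\<^sub>v ?v) $ a = 0\<^sub>v (msize m) $ a" using k a unfolding kerf_def by simp
    qed (simp add: moment_matrix_def)
    then have "{z. poly_eval m ?v z = 0} \<in> {{z. poly_eval m c z = 0} | c. c \<in> carrier_vec (msize m) \<and> moment_matrix m \<gamma> *\<^sub>v c = 0\<^sub>v (msize m)}"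
      by auto
    then have "z \<in> {z. poly_eval m ?v z = 0}" using z unfolding variety_def by (rule InterD[rotated])
    moreover have "poly_eval m ?v z = (\<Sum>a<msize m. c a * ev m z a)" unfolding poly_eval_ev by (intro sum.cong) auto
    ultimately show "(\<Sum>a<msize m. c a * ev m z a) = 0" by simp
  qed
next
  assume h: "\<forall>c. kerf m \<gamma> c \<longrightarrow> (\<Sum>a<msize m. c a * ev m z a) = 0"
  show "z \<in> variety m \<gamma>" unfolding variety_def
  proof (intro InterI, clarify)
    fix v assume v: "v \<in> carrier_vec (msize m)" "moment_matrix m \<gamma> *\<^sub>v v = 0\<^sub>v (msize m)"
    have "kerf m \<gamma> (\<lambda>b. v $ b)" unfolding kerf_def
    proof (intro allI impI)
      fix a assume a: "a < msize m"
      have "(moment_matrix m \<gamma> *\<^sub>v v) $ a = (\<Sum>b<msize m. mm m \<gamma> a b * v $ b)"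
        using mult_mat_vec_sum[OF moment_matrix_carrier a v(1)] a moment_matrix_index by simp
      then show "(\<Sum>b<msize m. mm m \<gamma> a b * v $ b) = 0" using v(2) a by simp
    qed
    then show "poly_eval m v z = 0" using h by (simp add: poly_eval_ev)
  qed
qed


definition qf :: "nat \<Rightarrow> (nat \<Rightarrow> nat \<Rightarrow> real) \<Rightarrow> (nat \<Rightarrow> real) \<Rightarrow> real" where
  "qf m \<gamma> c = (\<Sum>a<msize m. \<Sum>b<msize m. c a * mm m \<gamma> a b * c b)"

lemma psd_qf: assumes "psd (moment_matrix m \<gamma>)" shows "0 \<le> qf m \<gamma> c"
proof -
  let ?v = "vec (msize m) c"
  let ?M = "moment_matrix m \<gamma>"
  have "0 \<le> ?v \<bullet> (?M *\<^sub>v ?v)" using assms unfolding psd_def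
    by (simp add: moment_matrix_def)
  also have "?v \<bullet> (?M *\<^sub>v ?v) = (\<Sum>a<msize m. ?v $ a * (?M *\<^sub>v ?v) $ a)"
    by (rule scalar_prod_sum, rule mult_mat_vec_carrier[OF moment_matrix_carrier]) simp
  also have "\<dots> = qf m \<gamma> c" unfolding qf_def
  proof (rule sum.cong[OF refl])
    fix a assume "a \<in> {..<msize m}"
    then have a: "a < msize m" by simp
    have "(?M *\<^sub>v ?v) $ a = (\<Sum>b<msize m. mm m \<gamma> a b * c b)"
      using mult_mat_vec_sum[OF moment_matrix_carrier a, of ?v] a by (simp add: moment_matrix_index)
    then show "?v $ a * (?M *\<^sub>v ?v) $ a = (\<Sum>b<msize m. c a * mm m \<gamma> a b * c b)"
      using a by (simp add: sum_distrib_left mult.assoc)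
  qed
  finally show ?thesis .
qed

lemma quad_zero:
  fixes x y :: real
  assumes "\<And>t. 0 \<le> 2*t*x + t^2*y" and "0 \<le> y"
  shows "x = 0"
proof (rule ccontr)
  assume x: "x \<noteq> 0"
  define t where "t = - x / (y+1)"
  have ty: "(y+1) * t = - x" unfolding t_def using assms(2) by simp
  have "(y+1)^2 * (2*t*x + t^2*y) = 2*x*(y+1)*((y+1)*t) + ((y+1)*t)^2*y"
    by (simp add: algebra_simps power2_eq_square)
  also have "\<dots> = - (x^2 * (y+2))" unfolding ty by (simp add: algebra_simps power2_eq_square)
  also have "\<dots> < 0"
  proof -
    have "0 < x^2" using x by simp
    moreover have "0 < y + 2" using assms(2) by simp
    ultimately show ?thesis by simp
  qed
  finally have "(y+1)^2 * (2*t*x + t^2*y) < 0" .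
  moreover have "0 \<le> (y+1)^2 * (2*t*x + t^2*y)" using assms(1)[of t] by simp
  ultimately show False by simp
qed

lemma psd_kernel_gen:
  fixes M :: "nat \<Rightarrow> nat \<Rightarrow> real"
  assumes sym: "\<And>a b. M a b = M b a" and pos: "\<And>c. 0 \<le> (\<Sum>a<N. \<Sum>b<N. c a * M a b * c b)"
    and z: "(\<Sum>a<N. \<Sum>b<N. c a * M a b * c b) = 0"
  shows "\<forall>a<N. (\<Sum>b<N. M a b * c b) = 0"
proof -
  define B where "B d e = (\<Sum>a<N. \<Sum>b<N. d a * M a b * e b)" for d e
  have Bsym: "B d e = B e d" for d e
    unfolding B_def by (subst sum.swap) (simp add: sym mult_ac)
  have exp: "B (\<lambda>a. c a + t * d a) (\<lambda>a. c a + t * d a) = B c c + 2 * t * B d c + t^2 * B d d" for t d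
  proof -
    have "B (\<lambda>a. c a + t * d a) (\<lambda>a. c a + t * d a) = B c c + t * B d c + t * B c d + t^2 * B d d"
      unfolding B_def by (simp add: algebra_simps power2_eq_square sum.distrib sum_distrib_left)
    then show ?thesis using Bsym[of c d] by simp
  qed
  define d where "d a = (\<Sum>b<N. M a b * c b)" for a
  have "\<And>t. 0 \<le> 2 * t * B d c + t^2 * B d d"
  proof -
    fix t
    have "0 \<le> B (\<lambda>a. c a + t * d a) (\<lambda>a. c a + t * d a)" unfolding B_def by (rule pos)
    then show "0 \<le> 2 * t * B d c + t^2 * B d d" using exp[of t d] z unfolding B_def by simp
  qed
  then have "B d c = 0" using quad_zero pos[of d] unfolding B_def by blast
  moreover have "B d c = (\<Sum>a<N. d a ^ 2)"
    unfolding B_def d_def by (simp add: power2_eq_square sum_distrib_left mult_ac)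
  ultimately have "(\<Sum>a<N. d a ^ 2) = 0" by simp
  then have "\<forall>a\<in>{..<N}. d a ^ 2 = 0" by (subst sum_nonneg_eq_0_iff[symmetric]) auto
  then show ?thesis unfolding d_def by simp
qed

lemma qf_zero_kerf:
  assumes "psd (moment_matrix m \<gamma>)" "qf m \<gamma> c = 0"
  shows "kerf m \<gamma> c"
  using psd_kernel_gen[of "mm m \<gamma>" "msize m" c] mm_sym psd_qf[OF assms(1)] assms(2)
  unfolding kerf_def qf_def by blast

lemma sum_if_subset: "J \<subseteq> {..<S::nat} \<Longrightarrow> (\<Sum>b<S. if b \<in> J then g b else 0) = (\<Sum>b\<in>J. g b)"
proof -
  assume J: "J \<subseteq> {..<S}"
  have "(\<Sum>b<S. if b \<in> J then g b else 0) = sum g ({..<S} \<inter> J)" by (rule sum.inter_restrict[symmetric]) simp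
  also have "{..<S} \<inter> J = J" using J by blast
  finally show ?thesis .
qed

lemma sum_if_eq: "k < (S::nat) \<Longrightarrow> (\<Sum>b<S. if b = k then g b else 0) = (g k :: real)"
  by (subst sum.delta) auto

locale flat =
  fixes S :: nat and Bf :: "nat \<Rightarrow> nat \<Rightarrow> real" and J :: "nat set" and Z :: "(real\<times>real) set"
    and e :: "real\<times>real \<Rightarrow> nat \<Rightarrow> real" and lam :: "nat \<Rightarrow> nat \<Rightarrow> real"
    and X :: "nat \<Rightarrow> nat" and Q :: "nat \<Rightarrow> nat"
  assumes J: "J \<subseteq> {..<S}" and fZ: "finite Z" and cardJZ: "card J = card Z"
  and sym: "\<And>a b. Bf a b = Bf b a"
  and pos: "\<And>c. 0 \<le> (\<Sum>a<S. \<Sum>b<S. c a * Bf a b * c b)"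
  and indep: "\<And>y. (\<forall>a<S. (\<Sum>j\<in>J. y j * Bf a j) = 0) \<Longrightarrow> \<forall>j\<in>J. y j = 0"
  and flatc: "\<And>k a. k < S \<Longrightarrow> a < S \<Longrightarrow> Bf a k = (\<Sum>j\<in>J. lam k j * Bf a j)"
  and var: "\<And>z c. z \<in> Z \<Longrightarrow> (\<forall>a<S. (\<Sum>b<S. Bf a b * c b) = 0) \<Longrightarrow> (\<Sum>a<S. c a * e z a) = 0"
  and e0: "\<And>z. z \<in> Z \<Longrightarrow> e z 0 = 1" and S0: "0 < S"
  and XS: "\<And>k. k \<in> J \<Longrightarrow> X k < S" and QS: "\<And>k. k \<in> J \<Longrightarrow> Q k < S"
  and Xsym: "\<And>k l. k \<in> J \<Longrightarrow> l \<in> J \<Longrightarrow> Bf (X k) l = Bf (X l) k"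
  and Qsym: "\<And>k l. k \<in> J \<Longrightarrow> l \<in> J \<Longrightarrow> Bf (Q k) l = Bf (Q l) k"
  and Xe: "\<And>z k. z \<in> Z \<Longrightarrow> k \<in> J \<Longrightarrow> e z (X k) = fst z * e z k"
  and Qe: "\<And>z k. z \<in> Z \<Longrightarrow> k \<in> J \<Longrightarrow> e z (Q k) = snd z * e z k"
begin

lemma fJ: "finite J" using J finite_subset by blast

lemma E1: assumes z: "z \<in> Z" and k: "k < S" shows "e z k = (\<Sum>j\<in>J. lam k j * e z j)"
proof -
  define c where "c b = (if b = k then 1 else 0) - (if b \<in> J then lam k b else 0)" for b
  have "\<forall>a<S. (\<Sum>b<S. Bf a b * c b) = 0"
  proof (intro allI impI)
    fix a assume a: "a < S"
    have "(\<Sum>b<S. Bf a b * c b) = (\<Sum>b<S. (if b = k then Bf a b else 0) - (if b \<in> J then lam k b * Bf a b else 0))"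
      unfolding c_def by (intro sum.cong) (auto simp: algebra_simps)
    also have "\<dots> = Bf a k - (\<Sum>j\<in>J. lam k j * Bf a j)"
      by (simp add: sum_subtractf sum_if_eq[OF k] sum_if_subset[OF J])
    also have "\<dots> = 0" using flatc[OF k a] by simp
    finally show "(\<Sum>b<S. Bf a b * c b) = 0" .
  qed
  from var[OF z this] have "(\<Sum>a<S. c a * e z a) = 0" .
  moreover have "(\<Sum>a<S. c a * e z a) = e z k - (\<Sum>j\<in>J. lam k j * e z j)"
  proof -
    have "(\<Sum>a<S. c a * e z a) = (\<Sum>a<S. (if a = k then e z a else 0) - (if a \<in> J then lam k a * e z a else 0))"
      unfolding c_def by (intro sum.cong) (auto simp: algebra_simps)
    also have "\<dots> = e z k - (\<Sum>j\<in>J. lam k j * e z j)"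
      by (simp add: sum_subtractf sum_if_eq[OF k] sum_if_subset[OF J])
    finally show ?thesis .
  qed
  ultimately show ?thesis by simp
qed

lemma qf_J: "(\<Sum>a<S. \<Sum>b<S. (if a \<in> J then c a else 0) * Bf a b * (if b \<in> J then c b else 0))
   = (\<Sum>a\<in>J. c a * (\<Sum>b\<in>J. Bf a b * c b))"
proof -
  have "(\<Sum>a<S. \<Sum>b<S. (if a \<in> J then c a else 0) * Bf a b * (if b \<in> J then c b else 0))
     = (\<Sum>a<S. if a \<in> J then c a * (\<Sum>b<S. if b \<in> J then Bf a b * c b else 0) else 0)"
    by (intro sum.cong) (auto simp: sum_distrib_left mult_ac intro!: sum.cong)
  also have "\<dots> = (\<Sum>a\<in>J. c a * (\<Sum>b\<in>J. Bf a b * c b))"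
    by (simp add: sum_if_subset[OF J])
  finally show ?thesis .
qed

lemma Jinj: assumes "\<forall>i\<in>J. (\<Sum>k\<in>J. Bf i k * c k) = 0" shows "\<forall>k\<in>J. c k = 0"
proof -
  let ?c = "\<lambda>a. if a \<in> J then c a else 0"
  have "(\<Sum>a<S. \<Sum>b<S. ?c a * Bf a b * ?c b) = 0" unfolding qf_J using assms by simp
  from psd_kernel_gen[of Bf S ?c, OF sym pos this]
  have "\<forall>a<S. (\<Sum>b<S. Bf a b * ?c b) = 0" .
  then have "\<forall>a<S. (\<Sum>j\<in>J. c j * Bf a j) = 0"
    by (simp add: if_distrib sum_if_subset[OF J] mult.commute cong: if_cong)
  then show ?thesis by (rule indep)
qed

lemma Yex: "\<exists>Y. \<forall>z\<in>Z. \<forall>i\<in>J. (\<Sum>k\<in>J. Bf i k * Y z k) = e z i"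
proof -
  have "\<forall>z\<in>Z. \<exists>y. \<forall>i\<in>J. (\<Sum>k\<in>J. Bf i k * y k) = e z i"
    using inj_imp_surj_fin[OF fJ fJ refl, of Bf] Jinj by blast
  then show ?thesis by metis
qed

end
locale flat2 = flat +
  fixes Y :: "real\<times>real \<Rightarrow> nat \<Rightarrow> real"
  assumes Y: "\<And>z i. z \<in> Z \<Longrightarrow> i \<in> J \<Longrightarrow> (\<Sum>k\<in>J. Bf i k * Y z k) = e z i"
begin

lemma E2: assumes z: "z \<in> Z" and a: "a < S" shows "(\<Sum>k\<in>J. Bf a k * Y z k) = e z a"
proof -
  have "(\<Sum>k\<in>J. Bf a k * Y z k) = (\<Sum>k\<in>J. (\<Sum>j\<in>J. lam a j * Bf k j) * Y z k)"
  proof (rule sum.cong[OF refl])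
    fix k assume k: "k \<in> J"
    then have "k < S" using J by auto
    then show "Bf a k * Y z k = (\<Sum>j\<in>J. lam a j * Bf k j) * Y z k"
      using flatc[OF a \<open>k < S\<close>] sym[of a k] by simp
  qed
  also have "\<dots> = (\<Sum>j\<in>J. lam a j * (\<Sum>k\<in>J. Bf j k * Y z k))"
  proof -
    have "(\<Sum>k\<in>J. (\<Sum>j\<in>J. lam a j * Bf k j) * Y z k) = (\<Sum>k\<in>J. \<Sum>j\<in>J. lam a j * Bf k j * Y z k)"
      by (simp add: sum_distrib_right)
    also have "\<dots> = (\<Sum>j\<in>J. \<Sum>k\<in>J. lam a j * Bf k j * Y z k)" by (rule sum.swap)
    also have "\<dots> = (\<Sum>j\<in>J. lam a j * (\<Sum>k\<in>J. Bf j k * Y z k))"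
      apply (intro sum.cong refl)
      apply (simp add: sum_distrib_left)
      apply (intro sum.cong refl)
      apply (metis sym mult.assoc)
      done
    finally show ?thesis .
  qed
  also have "\<dots> = (\<Sum>j\<in>J. lam a j * e z j)" using Y[OF z] by simp
  also have "\<dots> = e z a" using E1[OF z a] by simp
  finally show ?thesis .
qed

definition G where "G z w = (\<Sum>k\<in>J. Y z k * e w k)"

lemma G_alt: assumes "w \<in> Z" shows "G z w = (\<Sum>k\<in>J. \<Sum>l\<in>J. Y z k * Bf k l * Y w l)"
  unfolding G_def
proof (rule sum.cong[OF refl])
  fix k assume k: "k \<in> J"
  then have "k < S" using J by auto
  show "Y z k * e w k = (\<Sum>l\<in>J. Y z k * Bf k l * Y w l)"
    by (subst E2[OF assms \<open>k < S\<close>, symmetric]) (simp add: sum_distrib_left mult_ac)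
qed

lemma G_sym: assumes "z \<in> Z" "w \<in> Z" shows "G z w = G w z"
  unfolding G_alt[OF assms(1)] G_alt[OF assms(2)]
  by (subst sum.swap) (simp add: sym mult_ac)

definition Lx where "Lx P z w = (\<Sum>k\<in>J. \<Sum>l\<in>J. Y z k * Bf (P k) l * Y w l)"

lemma Lx_sym:
  assumes Psym: "\<And>k l. k \<in> J \<Longrightarrow> l \<in> J \<Longrightarrow> Bf (P k) l = Bf (P l) k"
  shows "Lx P z w = Lx P w z"
proof -
  have "Lx P w z = (\<Sum>l\<in>J. \<Sum>k\<in>J. Y w k * Bf (P k) l * Y z l)" unfolding Lx_def by (rule sum.swap)
  also have "\<dots> = (\<Sum>l\<in>J. \<Sum>k\<in>J. Y z l * Bf (P l) k * Y w k)"
    by (intro sum.cong refl) (simp add: Psym mult_ac)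
  finally show ?thesis unfolding Lx_def by simp
qed

lemma Lx_eval:
  assumes w: "w \<in> Z" and PS: "\<And>k. k \<in> J \<Longrightarrow> P k < S"
    and Pe: "\<And>k. k \<in> J \<Longrightarrow> e w (P k) = h * e w k"
  shows "Lx P z w = h * G z w"
proof -
  have "Lx P z w = (\<Sum>k\<in>J. Y z k * (\<Sum>l\<in>J. Bf (P k) l * Y w l))"
    unfolding Lx_def by (simp add: sum_distrib_left mult_ac)
  also have "\<dots> = (\<Sum>k\<in>J. Y z k * (h * e w k))"
    by (intro sum.cong refl) (simp add: E2[OF w PS] Pe)
  also have "\<dots> = h * G z w" unfolding G_def by (simp add: sum_distrib_left mult_ac)
  finally show ?thesis .
qed

lemma orth: assumes z: "z \<in> Z" and w: "w \<in> Z" and ne: "z \<noteq> w" shows "G z w = 0"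
proof -
  have "fst w * G z w = fst z * G w z"
    using Lx_eval[OF w XS Xe[OF w]] Lx_eval[OF z XS Xe[OF z]] Lx_sym[OF Xsym] by metis
  then have 1: "(fst w - fst z) * G z w = 0" using G_sym[OF z w] by (simp add: algebra_simps)
  have "snd w * G z w = snd z * G w z"
    using Lx_eval[OF w QS Qe[OF w]] Lx_eval[OF z QS Qe[OF z]] Lx_sym[OF Qsym] by metis
  then have 2: "(snd w - snd z) * G z w = 0" using G_sym[OF z w] by (simp add: algebra_simps)
  show ?thesis
  proof (rule ccontr)
    assume "G z w \<noteq> 0"
    then have "fst w = fst z" "snd w = snd z" using 1 2 by auto
    then show False using ne by (simp add: prod_eq_iff)
  qed
qed

lemma Gpos: assumes z: "z \<in> Z" shows "0 < G z z"
proof -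
  let ?c = "\<lambda>a. if a \<in> J then Y z a else 0"
  have q: "(\<Sum>a<S. \<Sum>b<S. ?c a * Bf a b * ?c b) = G z z"
    unfolding qf_J G_alt[OF z] by (simp add: sum_distrib_left mult_ac)
  have "0 \<le> G z z" using pos[of ?c] q by simp
  moreover have "G z z \<noteq> 0"
  proof
    assume "G z z = 0"
    then have "\<forall>a<S. (\<Sum>b<S. Bf a b * ?c b) = 0" using psd_kernel_gen[of Bf S ?c, OF sym pos] q by simp
    then have "(\<Sum>b<S. Bf 0 b * ?c b) = 0" using S0 by blast
    moreover have "(\<Sum>b<S. Bf 0 b * ?c b) = e z 0"
      using E2[OF z S0] by (simp add: if_distrib sum_if_subset[OF J] cong: if_cong)
    ultimately show False using e0[OF z] by simp
  qed
  ultimately show ?thesis by simp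
qed

lemma sum_orth: assumes u: "u \<in> Z" shows "(\<Sum>w\<in>Z. c w * G w u) = c u * G u u"
proof -
  have "(\<Sum>w\<in>Z. c w * G w u) = (\<Sum>w\<in>Z. if w = u then c w * G w u else 0)"
    by (intro sum.cong refl) (auto simp: orth u)
  also have "\<dots> = c u * G u u" using u fZ by (subst sum.delta) auto
  finally show ?thesis .
qed

lemma sum_G_expand: assumes u: "u \<in> Z"
  shows "(\<Sum>w\<in>Z. c w * G w u) = (\<Sum>i\<in>J. e u i * (\<Sum>w\<in>Z. Y w i * c w))"
proof -
  have "(\<Sum>w\<in>Z. c w * G w u) = (\<Sum>w\<in>Z. \<Sum>i\<in>J. c w * Y w i * e u i)"
    unfolding G_def by (simp add: sum_distrib_left mult_ac)
  also have "\<dots> = (\<Sum>i\<in>J. \<Sum>w\<in>Z. c w * Y w i * e u i)" by (rule sum.swap)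
  also have "\<dots> = (\<Sum>i\<in>J. e u i * (\<Sum>w\<in>Z. Y w i * c w))"
    by (simp add: sum_distrib_left mult_ac)
  finally show ?thesis .
qed

lemma Tex: assumes j: "j \<in> J" shows "\<exists>t. \<forall>i\<in>J. (\<Sum>w\<in>Z. Y w i * t w) = (if i = j then 1 else 0)"
proof (rule inj_imp_surj_fin[OF fJ fZ cardJZ])
  fix c assume c: "\<forall>i\<in>J. (\<Sum>w\<in>Z. Y w i * c w) = 0"
  show "\<forall>u\<in>Z. c u = 0"
  proof
    fix u assume u: "u \<in> Z"
    have "c u * G u u = 0" using sum_orth[OF u, of c] sum_G_expand[OF u, of c] c by simp
    then show "c u = 0" using Gpos[OF u] by simp
  qed
qed

lemma Tval: assumes j: "j \<in> J" and t: "\<forall>i\<in>J. (\<Sum>w\<in>Z. Y w i * t w) = (if i = j then 1 else 0)"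
  and z: "z \<in> Z" shows "t z = e z j / G z z"
proof -
  have "t z * G z z = (\<Sum>i\<in>J. e z i * (if i = j then 1 else 0))"
    using sum_orth[OF z, of t] sum_G_expand[OF z, of t] t by simp
  also have "\<dots> = e z j" using j fJ by (simp add: if_distrib cong: if_cong)
  finally show ?thesis using Gpos[OF z] by (simp add: field_simps)
qed

lemma Fcol: assumes a: "a < S" and j: "j \<in> J" shows "Bf a j = (\<Sum>w\<in>Z. e w a * e w j / G w w)"
proof -
  obtain t where t: "\<forall>i\<in>J. (\<Sum>w\<in>Z. Y w i * t w) = (if i = j then 1 else 0)" using Tex[OF j] by blast
  have "Bf a j = (\<Sum>i\<in>J. Bf a i * (if i = j then 1 else 0))"
    using j fJ by (simp add: if_distrib cong: if_cong)
  also have "\<dots> = (\<Sum>i\<in>J. Bf a i * (\<Sum>w\<in>Z. Y w i * t w))" using t by simp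
  also have "\<dots> = (\<Sum>i\<in>J. \<Sum>w\<in>Z. t w * (Bf a i * Y w i))" by (simp add: sum_distrib_left mult_ac)
  also have "\<dots> = (\<Sum>w\<in>Z. \<Sum>i\<in>J. t w * (Bf a i * Y w i))" by (rule sum.swap)
  also have "\<dots> = (\<Sum>w\<in>Z. t w * e w a)" by (simp add: sum_distrib_left[symmetric] E2[OF _ a])
  also have "\<dots> = (\<Sum>w\<in>Z. e w a * e w j / G w w)" by (intro sum.cong refl) (simp add: Tval[OF j t])
  finally show ?thesis .
qed

lemma Fall: assumes a: "a < S" and b: "b < S" shows "Bf a b = (\<Sum>w\<in>Z. e w a * e w b / G w w)"
proof -
  have "Bf a b = (\<Sum>j\<in>J. lam b j * Bf a j)" by (rule flatc[OF b a])
  also have "\<dots> = (\<Sum>j\<in>J. \<Sum>w\<in>Z. lam b j * (e w a * e w j / G w w))"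
    using J by (simp add: Fcol[OF a] sum_distrib_left subset_iff)
  also have "\<dots> = (\<Sum>w\<in>Z. \<Sum>j\<in>J. lam b j * (e w a * e w j / G w w))" by (rule sum.swap)
  also have "\<dots> = (\<Sum>w\<in>Z. e w a / G w w * (\<Sum>j\<in>J. lam b j * e w j))"
    by (intro sum.cong refl) (simp add: sum_distrib_left sum_divide_distrib mult_ac)
  also have "\<dots> = (\<Sum>w\<in>Z. e w a * e w b / G w w)"
    by (intro sum.cong refl) (simp add: E1[OF _ b])
  finally show ?thesis .
qed

end

lemma (in flat) flat_main:
  "\<exists>g. (\<forall>w\<in>Z. 0 < g w) \<and> (\<forall>a<S. \<forall>b<S. Bf a b = (\<Sum>w\<in>Z. g w * e w a * e w b))"
proof -
  obtain Y where Y: "\<forall>z\<in>Z. \<forall>i\<in>J. (\<Sum>k\<in>J. Bf i k * Y z k) = e z i" using Yex by blast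
  interpret f2: flat2 S Bf J Z e lam X Q Y by unfold_locales (use Y in blast)
  show ?thesis
    by (rule exI[of _ "\<lambda>w. 1 / f2.G w w"]) (auto simp: f2.Gpos f2.Fall)
qed

lemma qf_restrict: assumes J: "J \<subseteq> {..<S::nat}"
  shows "(\<Sum>a<S. \<Sum>b<S. (if a \<in> J then c a else 0) * M a b * (if b \<in> J then c b else 0))
   = (\<Sum>a\<in>J. c a * (\<Sum>b\<in>J. M a b * (c b::real)))"
proof -
  have "(\<Sum>a<S. \<Sum>b<S. (if a \<in> J then c a else 0) * M a b * (if b \<in> J then c b else 0))
     = (\<Sum>a<S. if a \<in> J then c a * (\<Sum>b<S. if b \<in> J then M a b * c b else 0) else 0)"
    by (intro sum.cong) (auto simp: sum_distrib_left mult_ac intro!: sum.cong)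
  also have "\<dots> = (\<Sum>a\<in>J. c a * (\<Sum>b\<in>J. M a b * c b))"
    by (simp add: sum_if_subset[OF J])
  finally show ?thesis .
qed

lemma split_deg: assumes "i + j \<le> 2 * n"
  shows "\<exists>a<msize n. \<exists>b<msize n. fst (mons n ! a) + fst (mons n ! b) = i \<and> snd (mons n ! a) + snd (mons n ! b) = j"
proof -
  define i1 where "i1 = min i n"
  define j1 where "j1 = min j (n - i1)"
  have "i1 + j1 \<le> n" unfolding i1_def j1_def by auto
  moreover have "(i - i1) + (j - j1) \<le> n" using assms unfolding i1_def j1_def by auto
  ultimately obtain a b where "a < msize n" "mons n ! a = (i1, j1)" "b < msize n" "mons n ! b = (i - i1, j - j1)"
    using mons_idx by metis
  then show ?thesis unfolding i1_def j1_def by (intro exI[of _ a] exI[of _ b]) auto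
qed

lemma mm_Suc_eq:
  assumes agree: "\<forall>i j. i + j \<le> 2 * n \<longrightarrow> \<beta>' i j = \<beta> i j" and a: "a < msize n" and b: "b < msize n"
  shows "mm (Suc n) \<beta>' a b = mm n \<beta> a b"
  using agree mons_deg[OF a] mons_deg[OF b] unfolding mm_def mons_nth_Suc[OF a] mons_nth_Suc[OF b] by simp

lemma ev_Suc_eq: "a < msize n \<Longrightarrow> ev (Suc n) z a = ev n z a"
  unfolding ev_def by (simp add: mons_nth_Suc)

lemma msize_mono: "msize n \<le> msize (Suc n)" by (simp add: msize_Suc)

lemma variety_Suc_subset:
  assumes agree: "\<forall>i j. i + j \<le> 2 * n \<longrightarrow> \<beta>' i j = \<beta> i j" and psdB: "psd (moment_matrix (Suc n) \<beta>')"
  shows "variety (Suc n) \<beta>' \<subseteq> variety n \<beta>"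
proof
  fix z assume z: "z \<in> variety (Suc n) \<beta>'"
  let ?s = "msize n" and ?S = "msize (Suc n)"
  have sub: "{..<?s} \<subseteq> {..<?S}" using msize_mono by auto
  show "z \<in> variety n \<beta>" unfolding variety_iff
  proof (intro allI impI)
    fix c assume k: "kerf n \<beta> c"
    let ?c = "\<lambda>b. if b \<in> {..<?s} then c b else 0"
    have "qf (Suc n) \<beta>' ?c = (\<Sum>a\<in>{..<?s}. c a * (\<Sum>b\<in>{..<?s}. mm (Suc n) \<beta>' a b * c b))"
      unfolding qf_def by (rule qf_restrict[OF sub])
    also have "\<dots> = (\<Sum>a\<in>{..<?s}. c a * (\<Sum>b\<in>{..<?s}. mm n \<beta> a b * c b))"
      using mm_Suc_eq[OF agree] by simp
    also have "\<dots> = 0" using k unfolding kerf_def by simp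
    finally have "kerf (Suc n) \<beta>' ?c" by (rule qf_zero_kerf[OF psdB])
    then have "(\<Sum>a<?S. ?c a * ev (Suc n) z a) = 0" using z unfolding variety_iff by blast
    then have "(\<Sum>a<?S. if a \<in> {..<?s} then c a * ev (Suc n) z a else 0) = 0"
    proof -
      have "(\<Sum>a<?S. if a \<in> {..<?s} then c a * ev (Suc n) z a else 0) = (\<Sum>a<?S. ?c a * ev (Suc n) z a)"
        by (intro sum.cong refl) simp
      then show ?thesis using \<open>(\<Sum>a<?S. ?c a * ev (Suc n) z a) = 0\<close> by simp
    qed
    then show "(\<Sum>a<?s. c a * ev n z a) = 0"
      unfolding sum_if_subset[OF sub] by (simp add: ev_Suc_eq)
  qed
qed

lemma backward:
  assumes agree: "\<forall>i j. i + j \<le> 2 * n \<longrightarrow> \<beta>' i j = \<beta> i j"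
    and psdB: "psd (moment_matrix (Suc n) \<beta>')"
    and finV: "finite (variety n \<beta>)" and cardV: "card (variety n \<beta>) = mm_rank n \<beta>"
    and rk: "infinite (variety (Suc n) \<beta>') \<or> mm_rank (Suc n) \<beta>' \<le> card (variety (Suc n) \<beta>')"
  shows "\<exists>\<mu>. representing_measure n \<beta> \<mu>"
proof -
  define s where "s = msize n"
  define S where "S = msize (Suc n)"
  define Z where "Z = variety (Suc n) \<beta>'"
  define A where "A = moment_matrix n \<beta>"
  define B where "B = moment_matrix (Suc n) \<beta>'"
  have sS: "s \<le> S" unfolding s_def S_def by (rule msize_mono)
  have Ac: "A \<in> carrier_mat s s" unfolding A_def s_def by (rule moment_matrix_carrier)
  have Bc: "B \<in> carrier_mat S S" unfolding B_def S_def by (rule moment_matrix_carrier)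
  have ZV: "Z \<subseteq> variety n \<beta>" unfolding Z_def by (rule variety_Suc_subset[OF agree psdB])
  have fZ: "finite Z" using finite_subset[OF ZV finV] .
  have cZ: "card Z \<le> vec_space.rank s A"
    using card_mono[OF finV ZV] cardV unfolding mm_rank_def A_def s_def by simp
  have rB: "vec_space.rank S B \<le> card Z" using rk fZ unfolding mm_rank_def B_def S_def Z_def by simp
  obtain J where J: "J \<subseteq> {..<s}" "card J = vec_space.rank s A"
    and indA: "\<forall>y. (\<forall>i<s. (\<Sum>j\<in>J. y j * A $$ (i,j)) = 0) \<longrightarrow> (\<forall>j\<in>J. y j = 0)"
    using vec_space.indep_cols_exist[OF Ac] by blast
  have JS: "J \<subseteq> {..<S}" using J(1) sS by auto
  have BA: "B $$ (a,b) = A $$ (a,b)" if "a < s" "b < s" for a b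
    using that sS unfolding A_def B_def s_def S_def
    by (simp add: moment_matrix_index mm_Suc_eq[OF agree])
  have Bmm: "B $$ (a,b) = mm (Suc n) \<beta>' a b" if "a < S" "b < S" for a b
    using that unfolding B_def S_def by (simp add: moment_matrix_index)
  have indB: "\<forall>j\<in>J. y j = 0" if "\<forall>a<S. (\<Sum>j\<in>J. y j * B $$ (a,j)) = 0" for y
  proof -
    have "\<forall>i<s. (\<Sum>j\<in>J. y j * A $$ (i,j)) = 0"
    proof (intro allI impI)
      fix i assume i: "i < s"
      have "(\<Sum>j\<in>J. y j * A $$ (i,j)) = (\<Sum>j\<in>J. y j * B $$ (i,j))"
        using J(1) i by (intro sum.cong refl) (auto simp: BA)
      then show "(\<Sum>j\<in>J. y j * A $$ (i,j)) = 0" using that i sS by simp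
    qed
    then show ?thesis using indA by blast
  qed
  have cJB: "card J \<le> vec_space.rank S B" by (rule vec_space.rank_ge_indep_cols[OF Bc JS]) (use indB in blast)
  have cJZ: "card J = card Z" using cJB rB cZ J(2) by simp
  have rBJ: "vec_space.rank S B \<le> card J" using rB cJZ by simp
  have "\<forall>k<S. \<exists>lam. \<forall>a<S. B $$ (a,k) = (\<Sum>j\<in>J. lam j * B $$ (a,j))"
    using vec_space.indep_cols_span[OF Bc JS rBJ] indB by blast
  then obtain lam where lam: "\<And>k a. k < S \<Longrightarrow> a < S \<Longrightarrow> B $$ (a,k) = (\<Sum>j\<in>J. lam k j * B $$ (a,j))"
    by metis
  have "\<forall>k<s. \<exists>x<S. mons (Suc n) ! x = (fst (mons n ! k) + 1, snd (mons n ! k))"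
    using mons_deg mons_idx unfolding s_def S_def by (metis Suc_eq_plus1 add_Suc add_le_mono1)
  then obtain X where X: "\<And>k. k < s \<Longrightarrow> X k < S \<and> mons (Suc n) ! X k = (fst (mons n ! k) + 1, snd (mons n ! k))"
    by metis
  have "\<forall>k<s. \<exists>x<S. mons (Suc n) ! x = (fst (mons n ! k), snd (mons n ! k) + 1)"
    using mons_deg mons_idx unfolding s_def S_def by (metis Suc_eq_plus1 add_Suc_right add_le_mono1)
  then obtain Q where Q: "\<And>k. k < s \<Longrightarrow> Q k < S \<and> mons (Suc n) ! Q k = (fst (mons n ! k), snd (mons n ! k) + 1)"
    by metis
  have monsJ: "mons (Suc n) ! k = mons n ! k" if "k \<in> J" for k
    using that J(1) mons_nth_Suc unfolding s_def by auto
  interpret fl: flat S "mm (Suc n) \<beta>'" J Z "ev (Suc n)" lam X Q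
  proof (unfold_locales)
    show "J \<subseteq> {..<S}" by (rule JS)
    show "finite Z" by (rule fZ)
    show "card J = card Z" by (rule cJZ)
    show "\<And>a b. mm (Suc n) \<beta>' a b = mm (Suc n) \<beta>' b a" by (rule mm_sym)
    show "\<And>c. 0 \<le> (\<Sum>a<S. \<Sum>b<S. c a * mm (Suc n) \<beta>' a b * c b)"
      using psd_qf[OF psdB] unfolding qf_def S_def by blast
    show "\<forall>j\<in>J. y j = 0" if "\<forall>a<S. (\<Sum>j\<in>J. y j * mm (Suc n) \<beta>' a j) = 0" for y
    proof (rule indB, intro allI impI)
      fix a assume a: "a < S"
      have "(\<Sum>j\<in>J. y j * B $$ (a,j)) = (\<Sum>j\<in>J. y j * mm (Suc n) \<beta>' a j)"
        using JS a by (intro sum.cong refl) (auto simp: Bmm)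
      then show "(\<Sum>j\<in>J. y j * B $$ (a,j)) = 0" using that a by simp
    qed
    show "mm (Suc n) \<beta>' a k = (\<Sum>j\<in>J. lam k j * mm (Suc n) \<beta>' a j)" if "k < S" "a < S" for k a
    proof -
      have "(\<Sum>j\<in>J. lam k j * B $$ (a,j)) = (\<Sum>j\<in>J. lam k j * mm (Suc n) \<beta>' a j)"
        using JS that by (intro sum.cong refl) (auto simp: Bmm)
      then show ?thesis using lam[OF that] Bmm[OF that(2,1)] by simp
    qed
    show "(\<Sum>a<S. c a * ev (Suc n) z a) = 0"
      if "z \<in> Z" "\<forall>a<S. (\<Sum>b<S. mm (Suc n) \<beta>' a b * c b) = 0" for z c
      using that unfolding Z_def variety_iff kerf_def S_def by blast
    show "ev (Suc n) z 0 = 1" for z unfolding ev_def by (simp add: mons_0)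
    show "0 < S" unfolding S_def by (rule msize_pos)
    show "X k < S" if "k \<in> J" for k using X that J(1) by auto
    show "Q k < S" if "k \<in> J" for k using Q that J(1) by auto
    show "mm (Suc n) \<beta>' (X k) l = mm (Suc n) \<beta>' (X l) k" if "k \<in> J" "l \<in> J" for k l
    proof -
      have "k < s" "l < s" using that J(1) by auto
      then show ?thesis using X[of k] X[of l] monsJ[OF that(1)] monsJ[OF that(2)] unfolding mm_def
        by (simp add: add_ac)
    qed
    show "mm (Suc n) \<beta>' (Q k) l = mm (Suc n) \<beta>' (Q l) k" if "k \<in> J" "l \<in> J" for k l
    proof -
      have "k < s" "l < s" using that J(1) by auto
      then show ?thesis using Q[of k] Q[of l] monsJ[OF that(1)] monsJ[OF that(2)] unfolding mm_def
        by (simp add: add_ac)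
    qed
    show "ev (Suc n) z (X k) = fst z * ev (Suc n) z k" if "z \<in> Z" "k \<in> J" for z k
      using X[of k] that J(1) monsJ[OF that(2)] unfolding ev_def by auto
    show "ev (Suc n) z (Q k) = snd z * ev (Suc n) z k" if "z \<in> Z" "k \<in> J" for z k
      using Q[of k] that J(1) monsJ[OF that(2)] unfolding ev_def by auto
  qed
  obtain g where g: "\<forall>w\<in>Z. 0 < g w"
    and gB: "\<forall>a<S. \<forall>b<S. mm (Suc n) \<beta>' a b = (\<Sum>w\<in>Z. g w * ev (Suc n) w a * ev (Suc n) w b)"
    using fl.flat_main by blast
  have mom: "\<beta> i j = (\<Sum>w\<in>Z. g w * (fst w ^ i * snd w ^ j))" if ij: "i + j \<le> 2 * n" for i j
  proof -
    obtain a b where ab: "a < s" "b < s" "fst (mons n ! a) + fst (mons n ! b) = i"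
      "snd (mons n ! a) + snd (mons n ! b) = j"
      using split_deg[OF ij] unfolding s_def by blast
    have "\<beta> i j = mm n \<beta> a b" unfolding mm_def using ab by simp
    also have "\<dots> = mm (Suc n) \<beta>' a b" using mm_Suc_eq[OF agree] ab unfolding s_def by simp
    also have "\<dots> = (\<Sum>w\<in>Z. g w * ev (Suc n) w a * ev (Suc n) w b)" using gB ab sS by simp
    also have "\<dots> = (\<Sum>w\<in>Z. g w * (fst w ^ i * snd w ^ j))"
      using ab unfolding s_def by (intro sum.cong refl) (simp add: ev_def mons_nth_Suc ab(3,4)[symmetric] power_add mult_ac)
    finally show ?thesis .
  qed
  show ?thesis using atomic_rep[OF fZ _ mom] g by (meson less_imp_le)
qed

definition pe :: "nat \<Rightarrow> (nat \<Rightarrow> real) \<Rightarrow> real \<times> real \<Rightarrow> real" where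
  "pe m c z = (\<Sum>a<msize m. c a * ev m z a)"

lemma pe_sq: "(pe m c z)^2 = (\<Sum>a<msize m. \<Sum>b<msize m. c a * c b *
    (fst z ^ (fst (mons m ! a) + fst (mons m ! b)) * snd z ^ (snd (mons m ! a) + snd (mons m ! b))))"
  unfolding pe_def power2_eq_square sum_product ev_def by (intro sum.cong refl) (simp add: power_add mult_ac)

lemma continuous_pe: "continuous_on UNIV (pe m c)"
  unfolding pe_def ev_def by (intro continuous_intros)

lemma kerf_AE:
  assumes rep: "representing_measure n \<beta> \<mu>" and k: "kerf n \<beta> c"
  shows "AE z in \<mu>. pe n c z = 0"
proof -
  let ?s = "msize n"
  let ?mon = "\<lambda>a b z. fst z ^ (fst (mons n ! a) + fst (mons n ! b)) * snd z ^ (snd (mons n ! a) + snd (mons n ! b))"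
  have deg: "(fst (mons n ! a) + fst (mons n ! b)) + (snd (mons n ! a) + snd (mons n ! b)) \<le> 2 * n"
    if "a < ?s" "b < ?s" for a b using mons_deg[OF that(1)] mons_deg[OF that(2)] by simp
  have im: "integrable \<mu> (?mon a b)" "integral\<^sup>L \<mu> (?mon a b) = mm n \<beta> a b" if "a < ?s" "b < ?s" for a b
    using rep deg[OF that] unfolding representing_measure_def mm_def by auto
  have intb: "integrable \<mu> (\<lambda>z. \<Sum>b<?s. c a * c b * ?mon a b z)" if a: "a < ?s" for a
    apply (rule Bochner_Integration.integrable_sum) apply (rule integrable_mult_right) using im(1) a by auto
  have int: "integrable \<mu> (\<lambda>z. (pe n c z)^2)"
    unfolding pe_sq apply (rule Bochner_Integration.integrable_sum) using intb by auto
  have "integral\<^sup>L \<mu> (\<lambda>z. (pe n c z)^2) = (\<Sum>a<?s. integral\<^sup>L \<mu> (\<lambda>z. \<Sum>b<?s. c a * c b * ?mon a b z))"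
    unfolding pe_sq by (rule Bochner_Integration.integral_sum) (use intb in auto)
  also have "\<dots> = (\<Sum>a<?s. \<Sum>b<?s. c a * c b * mm n \<beta> a b)"
  proof (rule sum.cong[OF refl])
    fix a assume "a \<in> {..<?s}"
    then have a: "a < ?s" by simp
    have "integral\<^sup>L \<mu> (\<lambda>z. \<Sum>b<?s. c a * c b * ?mon a b z) = (\<Sum>b<?s. integral\<^sup>L \<mu> (\<lambda>z. c a * c b * ?mon a b z))"
      by (rule Bochner_Integration.integral_sum) (use im(1) a in auto)
    also have "\<dots> = (\<Sum>b<?s. c a * c b * mm n \<beta> a b)"
      using im(2) a by (intro sum.cong refl) simp
    finally show "integral\<^sup>L \<mu> (\<lambda>z. \<Sum>b<?s. c a * c b * ?mon a b z) = (\<Sum>b<?s. c a * c b * mm n \<beta> a b)" .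
  qed
  also have "\<dots> = (\<Sum>a<?s. c a * (\<Sum>b<?s. mm n \<beta> a b * c b))"
    by (simp add: sum_distrib_left mult_ac)
  also have "\<dots> = 0" using k unfolding kerf_def by simp
  finally have "AE z in \<mu>. (pe n c z)^2 = 0"
    using integral_nonneg_eq_0_iff_AE[OF int] by simp
  then show ?thesis by simp
qed

lemma AE_variety:
  assumes rep: "representing_measure n \<beta> \<mu>"
  shows "AE z in \<mu>. z \<in> variety n \<beta>"
proof -
  define F where "F = {{z. pe n c z \<noteq> 0} | c. kerf n \<beta> c}"
  have "open U" if "U \<in> F" for U
    using that continuous_pe unfolding F_def by (auto intro!: open_Collect_neq continuous_intros)
  then obtain F' where F': "F' \<subseteq> F" "countable F'" "\<Union>F' = \<Union>F" using Lindelof by metis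
  have "AE z in \<mu>. z \<notin> U" if "U \<in> F'" for U
  proof -
    from that F' obtain c where "U = {z. pe n c z \<noteq> 0}" "kerf n \<beta> c" unfolding F_def by auto
    then show ?thesis using kerf_AE[OF rep] by auto
  qed
  then have "\<forall>U\<in>F'. AE z in \<mu>. z \<notin> U" by blast
  then have "AE z in \<mu>. \<forall>U\<in>F'. z \<notin> U" by (rule AE_ball_countable[OF F'(2), THEN iffD2])
  then show ?thesis
  proof (rule AE_mp, intro AE_I2 impI)
    fix z assume "\<forall>U\<in>F'. z \<notin> U"
    then have "z \<notin> \<Union>F" using F'(3) by blast
    then show "z \<in> variety n \<beta>" unfolding variety_iff F_def pe_def by auto
  qed
qed

lemma moments_atomic:
  assumes rep: "representing_measure n \<beta> \<mu>" and finV: "finite (variety n \<beta>)"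
    and ij: "i + j \<le> 2 * n"
  shows "\<beta> i j = (\<Sum>v\<in>variety n \<beta>. measure \<mu> {v} * (fst v ^ i * snd v ^ j))"
proof -
  let ?V = "variety n \<beta>"
  have sets: "sets \<mu> = sets borel" using rep unfolding representing_measure_def by simp
  then have sp: "space \<mu> = UNIV" using sets_eq_imp_space_eq by fastforce
  have "integrable \<mu> (\<lambda>z::real\<times>real. fst z ^ 0 * snd z ^ 0)" using rep unfolding representing_measure_def
    by (metis le0 add_0)
  then have "integrable \<mu> (\<lambda>z::real\<times>real. 1::real)" by simp
  then have fin: "emeasure \<mu> (space \<mu>) < \<infinity>"
    unfolding integrable_iff_bounded by simp
  have sing: "{v} \<in> sets \<mu>" for v :: "real\<times>real" unfolding sets by simp
  have finv: "emeasure \<mu> {v} < \<infinity>" for v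
    using emeasure_space[of \<mu> "{v}"] fin by (metis order_le_less_trans)
  let ?f = "\<lambda>z::real\<times>real. fst z ^ i * snd z ^ j"
  let ?g = "\<lambda>z. \<Sum>v\<in>?V. ?f v * indicator {v} z"
  have fi: "integrable \<mu> ?f" and fb: "integral\<^sup>L \<mu> ?f = \<beta> i j"
    using rep ij unfolding representing_measure_def by auto
  have gi: "integrable \<mu> ?g"
    by (rule Bochner_Integration.integrable_sum, rule integrable_mult_right) (use sing finv in auto)
  have "AE z in \<mu>. ?f z = ?g z"
    using AE_variety[OF rep]
  proof (rule AE_mp, intro AE_I2 impI)
    fix z assume z: "z \<in> ?V"
    have "?g z = (\<Sum>v\<in>?V. if v = z then ?f v else 0)" by (intro sum.cong refl) auto
    also have "\<dots> = ?f z" using z finV by (subst sum.delta) auto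
    finally show "?f z = ?g z" by simp
  qed
  then have "integral\<^sup>L \<mu> ?f = integral\<^sup>L \<mu> ?g"
    by (rule integral_cong_AE[OF borel_measurable_integrable[OF fi] borel_measurable_integrable[OF gi]])
  also have "\<dots> = (\<Sum>v\<in>?V. integral\<^sup>L \<mu> (\<lambda>z. ?f v * indicator {v} z))"
    by (rule Bochner_Integration.integral_sum, rule integrable_mult_right) (use sing finv in auto)
  also have "\<dots> = (\<Sum>v\<in>?V. measure \<mu> {v} * ?f v)" using sp by (simp add: mult.commute)
  finally show ?thesis using fb by simp
qed

lemma qf_psd: assumes "\<And>c. 0 \<le> qf m \<gamma> c" shows "psd (moment_matrix m \<gamma>)"
  unfolding psd_def
proof
  fix v :: "real Matrix.vec" assume "v \<in> carrier_vec (dim_row (moment_matrix m \<gamma>))"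
  then have v: "v \<in> carrier_vec (msize m)" by (simp add: moment_matrix_def)
  let ?M = "moment_matrix m \<gamma>"
  have "v \<bullet> (?M *\<^sub>v v) = (\<Sum>a<msize m. v $ a * (?M *\<^sub>v v) $ a)"
    by (rule scalar_prod_sum, rule mult_mat_vec_carrier[OF moment_matrix_carrier v])
  also have "\<dots> = qf m \<gamma> (\<lambda>a. v $ a)" unfolding qf_def
  proof (rule sum.cong[OF refl])
    fix a assume "a \<in> {..<msize m}"
    then have a: "a < msize m" by simp
    have "(?M *\<^sub>v v) $ a = (\<Sum>b<msize m. mm m \<gamma> a b * v $ b)"
      using mult_mat_vec_sum[OF moment_matrix_carrier a v] a by (simp add: moment_matrix_index)
    then show "v $ a * (?M *\<^sub>v v) $ a = (\<Sum>b<msize m. v $ a * mm m \<gamma> a b * v $ b)"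
      by (simp add: sum_distrib_left mult.assoc)
  qed
  finally show "0 \<le> v \<bullet> (?M *\<^sub>v v)" using assms by simp
qed

lemma forward:
  assumes rep: "representing_measure n \<beta> \<mu>" and finV: "finite (variety n \<beta>)"
  shows "\<exists>\<beta>'. (\<forall>i j. i + j \<le> 2 * n \<longrightarrow> \<beta>' i j = \<beta> i j) \<and>
               psd (moment_matrix (Suc n) \<beta>') \<and>
               (infinite (variety (Suc n) \<beta>') \<or> mm_rank (Suc n) \<beta>' \<le> card (variety (Suc n) \<beta>'))"
proof -
  let ?V = "variety n \<beta>"
  define w where "w v = measure \<mu> {v}" for v
  define \<beta>' where "\<beta>' i j = (\<Sum>v\<in>?V. w v * (fst v ^ i * snd v ^ j))" for i j
  define S where "S = msize (Suc n)"
  let ?e = "ev (Suc n)"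
  have w0: "0 \<le> w v" for v unfolding w_def by simp
  have agree: "\<forall>i j. i + j \<le> 2 * n \<longrightarrow> \<beta>' i j = \<beta> i j"
    using moments_atomic[OF rep finV] unfolding \<beta>'_def w_def by simp
  have mmB: "mm (Suc n) \<beta>' a b = (\<Sum>v\<in>?V. w v * ?e v a * ?e v b)" for a b
    unfolding mm_def \<beta>'_def ev_def by (intro sum.cong refl) (simp add: power_add mult_ac)
  have qfB: "qf (Suc n) \<beta>' c = (\<Sum>v\<in>?V. w v * (pe (Suc n) c v)^2)" for c
  proof -
    have "qf (Suc n) \<beta>' c = (\<Sum>a<S. \<Sum>b<S. \<Sum>v\<in>?V. w v * (c a * ?e v a) * (c b * ?e v b))"
      unfolding qf_def mmB S_def by (simp add: sum_distrib_left sum_distrib_right mult_ac)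
    also have "\<dots> = (\<Sum>v\<in>?V. \<Sum>a<S. \<Sum>b<S. w v * (c a * ?e v a) * (c b * ?e v b))"
      by (subst sum.swap, subst (2) sum.swap) (rule refl)
    also have "\<dots> = (\<Sum>v\<in>?V. w v * (pe (Suc n) c v)^2)"
      unfolding pe_def S_def power2_eq_square sum_product
      by (simp add: sum_distrib_left mult_ac)
    finally show ?thesis .
  qed
  have psdB: "psd (moment_matrix (Suc n) \<beta>')"
    by (rule qf_psd) (simp add: qfB w0 sum_nonneg)
  define P where "P = {v\<in>?V. 0 < w v}"
  have PV: "P \<subseteq> ?V" unfolding P_def by auto
  have fP: "finite P" using finite_subset[OF PV finV] .
  have Psub: "P \<subseteq> variety (Suc n) \<beta>'"
  proof
    fix z assume z: "z \<in> P"
    show "z \<in> variety (Suc n) \<beta>'" unfolding variety_iff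
    proof (intro allI impI)
      fix c assume k: "kerf (Suc n) \<beta>' c"
      have "qf (Suc n) \<beta>' c = (\<Sum>a<msize (Suc n). c a * (\<Sum>b<msize (Suc n). mm (Suc n) \<beta>' a b * c b))"
        unfolding qf_def by (simp add: sum_distrib_left mult_ac)
      also have "\<dots> = 0" using k unfolding kerf_def by simp
      finally have s0: "(\<Sum>v\<in>?V. w v * (pe (Suc n) c v)^2) = 0" using qfB by simp
      have nn: "\<And>x. x \<in> ?V \<Longrightarrow> 0 \<le> w x * (pe (Suc n) c x)^2" using w0 by simp
      have "\<forall>v\<in>?V. w v * (pe (Suc n) c v)^2 = 0"
        by (rule iffD1[OF sum_nonneg_eq_0_iff[OF finV nn] s0])
      then have "w z * (pe (Suc n) c z)^2 = 0" using z PV by blast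
      then show "(\<Sum>a<msize (Suc n). c a * ev (Suc n) z a) = 0" using z unfolding P_def pe_def by simp
    qed
  qed
  have rk: "mm_rank (Suc n) \<beta>' \<le> card P"
    unfolding mm_rank_def
  proof (rule vec_space.rank_le_gen[OF moment_matrix_carrier fP])
    show "vec (msize (Suc n)) (?e t) \<in> carrier_vec (msize (Suc n))" for t by simp
    fix k assume k: "k < msize (Suc n)"
    show "\<exists>c. \<forall>i<msize (Suc n). moment_matrix (Suc n) \<beta>' $$ (i, k) =
        (\<Sum>t\<in>P. c t * vec (msize (Suc n)) (?e t) $ i)"
    proof (intro exI allI impI)
      fix i assume i: "i < msize (Suc n)"
      have "moment_matrix (Suc n) \<beta>' $$ (i, k) = (\<Sum>v\<in>?V. w v * ?e v i * ?e v k)"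
        using i k by (simp add: moment_matrix_index mmB)
      also have "\<dots> = (\<Sum>v\<in>P. w v * ?e v i * ?e v k)"
        by (rule sum.mono_neutral_cong_right[OF finV PV]) (use w0 in \<open>auto simp: P_def less_le\<close>)
      also have "\<dots> = (\<Sum>t\<in>P. (w t * ?e t k) * vec (msize (Suc n)) (?e t) $ i)"
        using i by (intro sum.cong refl) simp
      finally show "moment_matrix (Suc n) \<beta>' $$ (i, k) = (\<Sum>t\<in>P. (w t * ?e t k) * vec (msize (Suc n)) (?e t) $ i)" .
    qed
  qed
  have "infinite (variety (Suc n) \<beta>') \<or> mm_rank (Suc n) \<beta>' \<le> card (variety (Suc n) \<beta>')"
    using rk card_mono[OF _ Psub] by fastforce
  then show ?thesis using agree psdB by blast
qed

theorem corollary3p2: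
  fixes n :: nat and \<beta> :: "nat \<Rightarrow> nat \<Rightarrow> real"
  assumes "n \<ge> 1"
    and "finite (variety n \<beta>)"
    and "card (variety n \<beta>) = mm_rank n \<beta>"
  shows "(\<exists>\<mu>. representing_measure n \<beta> \<mu>) \<longleftrightarrow>
         (\<exists>\<beta>'. (\<forall>i j. i + j \<le> 2 * n \<longrightarrow> \<beta>' i j = \<beta> i j) \<and>
               psd (moment_matrix (n + 1) \<beta>') \<and>
               (infinite (variety (n + 1) \<beta>') \<or> mm_rank (n + 1) \<beta>' \<le> card (variety (n + 1) \<beta>')))"
proof
  assume "\<exists>\<mu>. representing_measure n \<beta> \<mu>"
  then obtain \<mu> where "representing_measure n \<beta> \<mu>" by blast
  from forward[OF this assms(2)] show "\<exists>\<beta>'. (\<forall>i j. i + j \<le> 2 * n \<longrightarrow> \<beta>' i j = \<beta> i j) \<and>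
               psd (moment_matrix (n + 1) \<beta>') \<and>
               (infinite (variety (n + 1) \<beta>') \<or> mm_rank (n + 1) \<beta>' \<le> card (variety (n + 1) \<beta>'))"
    by simp
next
  assume "\<exists>\<beta>'. (\<forall>i j. i + j \<le> 2 * n \<longrightarrow> \<beta>' i j = \<beta> i j) \<and>
               psd (moment_matrix (n + 1) \<beta>') \<and>
               (infinite (variety (n + 1) \<beta>') \<or> mm_rank (n + 1) \<beta>' \<le> card (variety (n + 1) \<beta>'))"
  then obtain \<beta>' where agree: "\<forall>i j. i + j \<le> 2 * n \<longrightarrow> \<beta>' i j = \<beta> i j"
    and psdB: "psd (moment_matrix (Suc n) \<beta>')"
    and rk: "infinite (variety (Suc n) \<beta>') \<or> mm_rank (Suc n) \<beta>' \<le> card (variety (Suc n) \<beta>')"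
    by auto
  show "\<exists>\<mu>. representing_measure n \<beta> \<mu>" by (rule backward[OF agree psdB assms(2,3) rk])
qed

end
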